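(* Let $X$ be a nonnegative random variable with support $(0,r)$, $r\in(0,+\infty]$, with expected value $\mathbb{E}[X]\in(0,+\infty)$ and finite CIGF. Then $$G_X(\alpha,\beta)=\sum_{n=0}^\infty\binom{\alpha}{n}(-1)^n(\mathbb{E}[X])^{n+\beta}\,\mathcal{IG}_{X_e}(n+\beta)\qquad\text{for all }(\alpha,\beta)\in D_X,$$ where $X_e$ is the equilibrium random variable of $X$.
   Context: For a random variable $X$ with CDF $F$ and survival function $\overline F=1-F$, with $l=\inf\{x:F(x)>0\}$, $r=\sup\{x:\overline F(x)>0\}$, the CIGF is $G_X(\alpha,\beta)=\int_l^r [F(x)]^\alpha[\overline F(x)]^\beta\,dx$ on $D_X=\{(\alpha,\beta)\in\mathbb{R}^2: G_X(\alpha,\beta)<\infty\}$. The generalized binomial coefficient is $\binom{\alpha}{n}=\alpha(\alpha-1)\cdots(\alpha-n+1)/n!$. The equilibrium random variable $X_e$ of $X$ is the absolutely continuous random variable with PDF $f_e(x)=\overline F(x)/\mathbb{E}[X]$, $x>0$. For an absolutely continuous random variable $Z$ with PDF $f$ on support $(0,r)$, Golomb's information generating function is $\mathcal{IG}_Z(\nu)=\int_0^r[f(x)]^\nu dx$. *)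

theory Defs
  imports "HOL-Probability.Probability"
begin

definition supp_left :: "(real \<Rightarrow> real) \<Rightarrow> ereal" where
  "supp_left F = Inf {ereal x | x. F x > 0}"

definition supp_right :: "(real \<Rightarrow> real) \<Rightarrow> ereal" where
  "supp_right F = Sup {ereal x | x. 1 - F x > 0}"

definition supp_interval :: "(real \<Rightarrow> real) \<Rightarrow> real set" where
  "supp_interval F = {x. supp_left F < ereal x \<and> ereal x < supp_right F}"

definition CIGF_dom :: "(real \<Rightarrow> real) \<Rightarrow> (real \<times> real) set" where
  "CIGF_dom F = {(a, b). (\<integral>\<^sup>+ x \<in> supp_interval F.
       ennreal (F x powr a * (1 - F x) powr b) \<partial>lborel) < \<infinity>}"

definition CIGF :: "(real \<Rightarrow> real) \<Rightarrow> real \<Rightarrow> real \<Rightarrow> real" where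
  "CIGF F a b = (LINT x : supp_interval F | lborel. F x powr a * (1 - F x) powr b)"

definition equilibrium_pdf :: "(real \<Rightarrow> real) \<Rightarrow> real \<Rightarrow> real \<Rightarrow> real" where
  "equilibrium_pdf F mu x = (if x > 0 then (1 - F x) / mu else 0)"

definition golomb_IG :: "(real \<Rightarrow> real) \<Rightarrow> ereal \<Rightarrow> real \<Rightarrow> real" where
  "golomb_IG f r \<nu> = (LINT x : {x. 0 < x \<and> ereal x < r} | lborel. f x powr \<nu>)"

end

theory Submission
  imports Defs
begin


lemma powr_half_bound:
  fixes t e :: real
  assumes "1/2 \<le> t" "t \<le> 1"
  shows "t powr e \<le> 2 powr \<bar>e\<bar>"
proof (cases "e \<ge> 0")
  case True
  have "t powr e \<le> 1 powr e" using assms True by (intro powr_mono2) auto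
  then have "t powr e \<le> 1" by simp
  also have "1 \<le> 2 powr \<bar>e\<bar>" by (rule ge_one_powr_ge_zero) auto
  finally show ?thesis .
next
  case False
  have "t powr e = (1/t) powr (-e)" using assms by (simp add: powr_minus_divide powr_divide)
  also have "\<dots> \<le> 2 powr (-e)" using assms False by (intro powr_mono2) (auto simp: field_simps)
  finally show ?thesis using False by simp
qed

lemma powr_half_lower:
  fixes t a :: real
  assumes "1/2 \<le> t" "t \<le> 1"
  shows "1 \<le> 2 powr \<bar>a\<bar> * t powr a"
proof -
  have "t powr (-a) \<le> 2 powr \<bar>a\<bar>" using powr_half_bound[OF assms, of "-a"] by simp
  moreover have "t powr (-a) = 1 / t powr a" using assms by (simp add: powr_minus_divide)
  moreover have "t powr a > 0" using assms by simp
  ultimately show ?thesis by (simp add: field_simps)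
qed

lemma gchoose_sign:
  fixes \<alpha> :: real and N :: nat
  assumes "\<alpha> < real N"
  obtains s :: real where "\<bar>s\<bar> = 1"
    "\<And>n. n \<ge> N \<Longrightarrow> \<bar>(\<alpha> gchoose n) * (-1)^n\<bar> = s * ((\<alpha> gchoose n) * (-1)^n)"
proof -
  define c where "c n = (\<alpha> gchoose n) * (-1::real)^n" for n
  define s :: real where "s = (if c N \<ge> 0 then 1 else -1)"
  have rec: "real (Suc n) * c (Suc n) = (real n - \<alpha>) * c n" for n
  proof -
    have "\<alpha> * (\<alpha> gchoose n) = real n * (\<alpha> gchoose n) + real (Suc n) * (\<alpha> gchoose Suc n)"
      by (rule gbinomial_mult_1)
    then have H: "(real n + 1) * (\<alpha> gchoose Suc n) = (\<alpha> - real n) * (\<alpha> gchoose n)"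
      by (simp add: algebra_simps)
    have "real (Suc n) * c (Suc n) = - (((real n + 1) * (\<alpha> gchoose Suc n)) * (-1)^n)"
      unfolding c_def by (simp add: algebra_simps)
    also have "\<dots> = - ((\<alpha> - real n) * (\<alpha> gchoose n) * (-1)^n)" by (simp only: H)
    also have "\<dots> = (real n - \<alpha>) * c n" unfolding c_def by (simp add: algebra_simps)
    finally show ?thesis .
  qed
  have pos: "s * c n \<ge> 0" if "n \<ge> N" for n
    using that
  proof (induction n rule: dec_induct)
    case base then show ?case by (simp add: s_def)
  next
    case (step m)
    have "real (Suc m) * (s * c (Suc m)) = (real m - \<alpha>) * (s * c m)"
      using arg_cong[OF rec[of m], of "\<lambda>z. s * z"] by (simp only: mult_ac)
    moreover have "real m - \<alpha> > 0" using step(1) assms by linarith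
    ultimately have "real (Suc m) * (s * c (Suc m)) \<ge> 0" using step.IH by (metis less_eq_real_def mult_nonneg_nonneg)
    then show ?case by (simp add: zero_le_mult_iff)
  qed
  have s1: "\<bar>s\<bar> = 1" by (simp add: s_def)
  show ?thesis
  proof (rule that[OF s1])
    fix n assume "n \<ge> N"
    have "\<bar>s * c n\<bar> = \<bar>c n\<bar>" by (simp add: abs_mult s1)
    then show "\<bar>(\<alpha> gchoose n) * (-1)^n\<bar> = s * ((\<alpha> gchoose n) * (-1)^n)"
      using pos[OF \<open>n \<ge> N\<close>] unfolding c_def by simp
  qed
qed



theorem proposition9:
  fixes M :: "'a measure" and X :: "'a \<Rightarrow> real" and F :: "real \<Rightarrow> real"
    and r :: ereal and \<mu> \<alpha> \<beta> :: real
  assumes "prob_space M"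
    and "X \<in> borel_measurable M"
    and "F = cdf (distr M borel X)"
    and "AE \<omega> in M. X \<omega> \<ge> 0"
    and "supp_left F = 0"
    and "supp_right F = r"
    and "0 < r"
    and "integrable M X"
    and "\<mu> = integral\<^sup>L M X"
    and "0 < \<mu>"
    and "(\<alpha>, \<beta>) \<in> CIGF_dom F"
  shows "(\<lambda>n. (\<alpha> gchoose n) * (-1) ^ n * \<mu> powr (real n + \<beta>)
            * golomb_IG (equilibrium_pdf F \<mu>) r (real n + \<beta>)) sums CIGF F \<alpha> \<beta>"
proof -
  define D where "D = distr M borel X"
  have rd: "real_distribution D" unfolding D_def
    using prob_space.real_distribution_distr[OF assms(1)] assms(2) by simp
  interpret rd: real_distribution D by (rule rd)
  have FD: "F = cdf D" using assms(3) D_def by simp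
  have monoF: "mono F" unfolding FD mono_def
    using rd.cdf_nondecreasing by blast
  have Flim: "(F \<longlongrightarrow> 1) at_top" unfolding FD
    using rd.cdf_lim_at_top_prob .
  have Fmeas[measurable]: "F \<in> borel_measurable borel" using borel_measurable_mono[OF monoF] .
  define S where "S = {x. 0 < x \<and> ereal x < r}"
  have Smeas[measurable]: "S \<in> sets borel" unfolding S_def by measurable
  have suppS: "supp_interval F = S" unfolding supp_interval_def S_def using assms(5,6) by simp
  have Fpos: "0 < F x" if "x \<in> S" for x
  proof -
    have "Inf {ereal x | x. F x > 0} < ereal x" using assms(5) that unfolding supp_left_def S_def by simp
    then obtain y where y: "F y > 0" "ereal y < ereal x" by (auto simp: Inf_less_iff)
    have "F y \<le> F x" by (rule monoD[OF monoF]) (use y in simp)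
    then show ?thesis using y by simp
  qed
  have Fless1: "F x < 1" if "x \<in> S" for x
  proof -
    have "ereal x < Sup {ereal x | x. 1 - F x > 0}" using assms(6) that unfolding supp_right_def S_def by simp
    then obtain y where y: "1 - F y > 0" "ereal x < ereal y" by (auto simp: less_Sup_iff)
    have "F x \<le> F y" by (rule monoD[OF monoF]) (use y in simp)
    then show ?thesis using y by simp
  qed
  define u where "u x = 1 - F x" for x
  define c where "c n = (\<alpha> gchoose n) * (-1::real)^n" for n
  define g where "g x = indicator S x * (F x powr \<alpha> * u x powr \<beta>)" for x
  define h where "h n x = indicator S x * u x powr (real n + \<beta>)" for n x
  have u01: "0 < u x" "u x < 1" if "x \<in> S" for x using Fpos[OF that] Fless1[OF that] by (auto simp: u_def)
  have g_meas[measurable]: "g \<in> borel_measurable borel" unfolding g_def u_def by measurable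
  have h_meas[measurable]: "h n \<in> borel_measurable borel" for n unfolding h_def u_def by measurable
  have g_nonneg: "0 \<le> g x" for x by (simp add: g_def)
  have h_nonneg: "0 \<le> h n x" for n x by (simp add: h_def)
  have g_int: "integrable lborel g"
  proof (rule integrableI_nonneg)
    show "g \<in> borel_measurable lborel" by simp
    show "AE x in lborel. 0 \<le> g x" by (simp add: g_nonneg)
    have "(\<integral>\<^sup>+ x. ennreal (g x) \<partial>lborel) = (\<integral>\<^sup>+ x \<in> S. ennreal (F x powr \<alpha> * (1 - F x) powr \<beta>) \<partial>lborel)"
      by (intro nn_integral_cong) (auto simp: g_def u_def indicator_def)
    also have "\<dots> < \<infinity>" using assms(11) suppS unfolding CIGF_dom_def by simp
    finally show "(\<integral>\<^sup>+ x. ennreal (g x) \<partial>lborel) < \<infinity>" .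
  qed
  obtain x0 where x0: "\<And>x. x \<ge> x0 \<Longrightarrow> F x > 1/2"
    using order_tendstoD(1)[OF Flim, of "1/2"] by (auto simp: eventually_at_top_linorder)
  have ind_int: "integrable lborel (indicator {0..x0} :: real \<Rightarrow> real)"
    by (rule integrable_real_indicator) (auto simp: emeasure_lborel_Icc_eq)
  have h_int: "integrable lborel (h n)" for n
  proof (rule Bochner_Integration.integrable_bound)
    show "integrable lborel (\<lambda>x. 2 powr \<bar>\<alpha>\<bar> * g x + 2 powr \<bar>real n + \<beta>\<bar> * indicator {0..x0} x)"
      using g_int ind_int by (intro Bochner_Integration.integrable_add Bochner_Integration.integrable_mult_right)
    show "h n \<in> borel_measurable lborel" by simp
    show "AE x in lborel. norm (h n x) \<le> norm (2 powr \<bar>\<alpha>\<bar> * g x + 2 powr \<bar>real n + \<beta>\<bar> * indicator {0..x0} x)"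
    proof (rule AE_I2)
      fix x
      have rhs: "0 \<le> 2 powr \<bar>\<alpha>\<bar> * g x + 2 powr \<bar>real n + \<beta>\<bar> * indicator {0..x0} x"
        using g_nonneg[of x] by simp
      have "h n x \<le> 2 powr \<bar>\<alpha>\<bar> * g x + 2 powr \<bar>real n + \<beta>\<bar> * indicator {0..x0} x"
      proof (cases "x \<in> S")
        case False then show ?thesis using rhs by (simp add: h_def)
      next
        case True
        note uu = u01[OF True]
        have hx: "h n x = u x powr (real n + \<beta>)" using True by (simp add: h_def)
        show ?thesis
        proof (cases "F x \<ge> 1/2")
          case True2: True
          have "u x powr (real n + \<beta>) = u x powr real n * u x powr \<beta>" by (simp add: powr_add)
          also have "\<dots> \<le> 1 * u x powr \<beta>"
          proof (rule mult_right_mono)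
            have "u x powr real n \<le> 1 powr real n" using uu by (intro powr_mono2) auto
            then show "u x powr real n \<le> 1" by simp
          qed simp
          also have "\<dots> \<le> (2 powr \<bar>\<alpha>\<bar> * F x powr \<alpha>) * u x powr \<beta>"
            using powr_half_lower[of "F x" \<alpha>] True2 Fless1[OF True] by (intro mult_right_mono) auto
          also have "\<dots> = 2 powr \<bar>\<alpha>\<bar> * g x" using True by (simp add: g_def)
          moreover have "0 \<le> 2 powr \<bar>real n + \<beta>\<bar> * indicator {0..x0} x" by simp
          ultimately show ?thesis using hx by linarith
        next
          case False2: False
          have "x < x0" using x0[of x] False2 by force
          moreover have "0 < x" using True by (simp add: S_def)
          ultimately have ind: "indicator {0..x0} x = (1::real)" by simp
          have "u x powr (real n + \<beta>) \<le> 2 powr \<bar>real n + \<beta>\<bar>"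
            using False2 uu by (intro powr_half_bound) (auto simp: u_def)
          moreover have "0 \<le> 2 powr \<bar>\<alpha>\<bar> * g x" using g_nonneg[of x] by simp
          ultimately show ?thesis using hx ind by simp
        qed
      qed
      then show "norm (h n x) \<le> norm (2 powr \<bar>\<alpha>\<bar> * g x + 2 powr \<bar>real n + \<beta>\<bar> * indicator {0..x0} x)"
        using rhs h_nonneg[of n x] by simp
    qed
  qed
  have f_sums: "(\<lambda>n. c n * h n x) sums g x" for x
  proof (cases "x \<in> S")
    case False then show ?thesis by (simp add: h_def g_def)
  next
    case True
    note uu = u01[OF True]
    have "\<bar>- u x\<bar> < 1" using uu by simp
    from gen_binomial_real[OF this, of \<alpha>]
    have "(\<lambda>n. (\<alpha> gchoose n) * (- u x) ^ n) sums (F x powr \<alpha>)" by (simp add: u_def)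
    then have "(\<lambda>n. (\<alpha> gchoose n) * (- u x) ^ n * u x powr \<beta>) sums (F x powr \<alpha> * u x powr \<beta>)"
      by (rule sums_mult2)
    moreover have "(\<alpha> gchoose n) * (- u x) ^ n * u x powr \<beta> = c n * h n x" for n
      using uu True by (simp add: c_def h_def powr_add powr_realpow power_minus[of "u x"])
    ultimately show ?thesis using True by (simp add: g_def)
  qed
  obtain N :: nat where N: "\<alpha> < real N" using reals_Archimedean2 by blast
  obtain s where s1: "\<bar>s\<bar> = 1" and sgn: "\<And>n. n \<ge> N \<Longrightarrow> \<bar>c n\<bar> = s * c n"
    using gchoose_sign[OF N] unfolding c_def by metis
  define f where "f n x = c (n + N) * h (n + N) x" for n x
  define T where "T x = g x - (\<Sum>i<N. c i * h i x)" for x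
  have f_sums': "(\<lambda>n. f n x) sums T x" for x
    unfolding f_def T_def using f_sums[of x] by (subst sums_iff_shift) simp
  have f_int: "integrable lborel (f n)" for n unfolding f_def using h_int by simp
  have f_norm: "norm (f n x) = s * f n x" for n x
    using sgn[of "n+N"] h_nonneg[of "n+N" x] by (simp add: f_def abs_mult)
  have f_norm_sums: "(\<lambda>n. norm (f n x)) sums (s * T x)" for x
    unfolding f_norm using sums_mult[OF f_sums'] .
  define B where "B x = \<bar>g x\<bar> + (\<Sum>i<N. \<bar>c i * h i x\<bar>)" for x
  have B_int: "integrable lborel B" unfolding B_def using g_int h_int by auto
  have T_le: "s * T x \<le> B x" for x
  proof -
    have "\<bar>s * T x\<bar> = \<bar>T x\<bar>" using s1 by (simp add: abs_mult)
    then have "s * T x \<le> \<bar>T x\<bar>" by linarith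
    also have "\<bar>T x\<bar> \<le> \<bar>g x\<bar> + \<bar>\<Sum>i<N. c i * h i x\<bar>" unfolding T_def by (rule abs_triangle_ineq4)
    also have "\<dots> \<le> B x" unfolding B_def by (intro add_left_mono sum_abs)
    finally show ?thesis .
  qed
  have bound: "(\<Sum>n<K. \<integral>x. norm (f n x) \<partial>lborel) \<le> integral\<^sup>L lborel B" for K
  proof -
    have "(\<Sum>n<K. \<integral>x. norm (f n x) \<partial>lborel) = (\<integral>x. (\<Sum>n<K. norm (f n x)) \<partial>lborel)"
      using f_int by (intro Bochner_Integration.integral_sum[symmetric]) auto
    also have "\<dots> \<le> integral\<^sup>L lborel B"
    proof (rule integral_mono)
      show "integrable lborel (\<lambda>x. \<Sum>n<K. norm (f n x))" using f_int by auto
      show "integrable lborel B" by (rule B_int)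
      fix x
      have "(\<Sum>n<K. norm (f n x)) \<le> (\<Sum>n. norm (f n x))"
        using f_norm_sums[of x] by (intro sum_le_suminf) (auto simp: sums_iff)
      also have "\<dots> = s * T x" using f_norm_sums[of x] by (simp add: sums_iff)
      also have "\<dots> \<le> B x" by (rule T_le)
      finally show "(\<Sum>n<K. norm (f n x)) \<le> B x" .
    qed
    finally show ?thesis .
  qed
  have summ: "summable (\<lambda>n. \<integral>x. norm (f n x) \<partial>lborel)"
    by (rule summableI_nonneg_bounded[OF _ bound]) simp
  have "(\<lambda>n. integral\<^sup>L lborel (f n)) sums (\<integral>x. (\<Sum>n. f n x) \<partial>lborel)"
    using f_int f_norm_sums summ by (intro sums_integral) (auto simp: sums_iff)
  moreover have "(\<lambda>x. \<Sum>n. f n x) = T" using f_sums' by (auto simp: sums_iff)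
  moreover have "integral\<^sup>L lborel T = integral\<^sup>L lborel g - (\<Sum>i<N. c i * integral\<^sup>L lborel (h i))"
    unfolding T_def using g_int h_int by (simp add: Bochner_Integration.integral_sum)
  moreover have "integral\<^sup>L lborel (f n) = c (n+N) * integral\<^sup>L lborel (h (n+N))" for n
    unfolding f_def by simp
  ultimately have "(\<lambda>n. c (n+N) * integral\<^sup>L lborel (h (n+N))) sums
      (integral\<^sup>L lborel g - (\<Sum>i<N. c i * integral\<^sup>L lborel (h i)))" by simp
  then have main: "(\<lambda>n. c n * integral\<^sup>L lborel (h n)) sums integral\<^sup>L lborel g"
    by (subst (asm) sums_iff_shift) simp
  have CIGF_eq: "CIGF F \<alpha> \<beta> = integral\<^sup>L lborel g"
    unfolding CIGF_def suppS set_lebesgue_integral_def g_def u_def by simp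
  have term_eq: "(\<alpha> gchoose n) * (-1) ^ n * \<mu> powr (real n + \<beta>)
      * golomb_IG (equilibrium_pdf F \<mu>) r (real n + \<beta>) = c n * integral\<^sup>L lborel (h n)" for n
  proof -
    have "golomb_IG (equilibrium_pdf F \<mu>) r (real n + \<beta>) = (\<integral>x. h n x / \<mu> powr (real n + \<beta>) \<partial>lborel)"
      unfolding golomb_IG_def set_lebesgue_integral_def S_def[symmetric]
    proof (rule Bochner_Integration.integral_cong[OF refl])
      fix x show "indicator S x *\<^sub>R equilibrium_pdf F \<mu> x powr (real n + \<beta>) = h n x / \<mu> powr (real n + \<beta>)"
      proof (cases "x \<in> S")
        case True then have "0 < x" "0 < u x" using u01 by (auto simp: S_def)
        then show ?thesis using True assms(10) by (simp add: h_def equilibrium_pdf_def u_def powr_divide)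
      qed (simp add: h_def)
    qed
    also have "\<dots> = integral\<^sup>L lborel (h n) / \<mu> powr (real n + \<beta>)" by simp
    finally show ?thesis using assms(10) by (simp add: c_def)
  qed
  show ?thesis using main unfolding term_eq CIGF_eq .
qed

end
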